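(* Assume that $\theta_n>0$ for all $n$ and that \[ \lim_{n\to\infty}\sum_{j=1}^{n-1}\frac{\theta_j\theta_{n-j}}{\theta_n}=0. \] Then $\lim_{n\to\infty}\mathbb{P}_n(L_1=n)=1$. Consequently $\mathbb{P}_n(K=1)\to1$ and $\mathbb{P}_n(R_j=0)\to1$ for every fixed $j$.
   Context: For $\sigma\in\mathcal{S}_n$ (permutations of $\{1,\dots,n\}$), $R_j(\sigma)$ is the number of cycles of length $j$, $L_1(\sigma)$ the length of the cycle containing $1$, and $K(\sigma)=\sum_jR_j(\sigma)$ the number of cycles. Given parameters $\theta_j\ge0$, $h_0=1$, $h_n=\frac1{n!}\sum_{\sigma\in\mathcal{S}_n}\prod_{j}\theta_j^{R_j(\sigma)}$, and $\mathbb{P}_n(\sigma)=\frac1{n!h_n}\prod_j\theta_j^{R_j(\sigma)}$. *)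

theory Defs
  imports "HOL-Analysis.Analysis" "HOL-Combinatorics.Permutations"
begin

definition perms :: "nat \<Rightarrow> (nat \<Rightarrow> nat) set" where
  "perms n = {\<sigma>. \<sigma> permutes {1..n}}"

definition cycle_of :: "(nat \<Rightarrow> nat) \<Rightarrow> nat \<Rightarrow> nat set" where
  "cycle_of \<sigma> x = {(\<sigma> ^^ k) x | k. True}"

definition cycles_of :: "nat \<Rightarrow> (nat \<Rightarrow> nat) \<Rightarrow> nat set set" where
  "cycles_of n \<sigma> = cycle_of \<sigma> ` {1..n}"

definition R :: "nat \<Rightarrow> nat \<Rightarrow> (nat \<Rightarrow> nat) \<Rightarrow> nat" where
  "R n j \<sigma> = card {C \<in> cycles_of n \<sigma>. card C = j}"

definition K :: "nat \<Rightarrow> (nat \<Rightarrow> nat) \<Rightarrow> nat" where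
  "K n \<sigma> = card (cycles_of n \<sigma>)"

definition L1 :: "(nat \<Rightarrow> nat) \<Rightarrow> nat" where
  "L1 \<sigma> = card (cycle_of \<sigma> 1)"

text \<open>Weight prod_j theta_j^(R_j sigma); only j in {1..n} can have R_j > 0.\<close>
definition weight :: "(nat \<Rightarrow> real) \<Rightarrow> nat \<Rightarrow> (nat \<Rightarrow> nat) \<Rightarrow> real" where
  "weight \<theta> n \<sigma> = (\<Prod>j\<in>{1..n}. \<theta> j ^ R n j \<sigma>)"

definition h :: "(nat \<Rightarrow> real) \<Rightarrow> nat \<Rightarrow> real" where
  "h \<theta> n = (\<Sum>\<sigma>\<in>perms n. weight \<theta> n \<sigma>) / fact n"

definition Pn :: "(nat \<Rightarrow> real) \<Rightarrow> nat \<Rightarrow> (nat \<Rightarrow> nat) \<Rightarrow> real" where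
  "Pn \<theta> n \<sigma> = weight \<theta> n \<sigma> / (fact n * h \<theta> n)"

definition Prob :: "(nat \<Rightarrow> real) \<Rightarrow> nat \<Rightarrow> ((nat \<Rightarrow> nat) \<Rightarrow> bool) \<Rightarrow> real" where
  "Prob \<theta> n E = (\<Sum>\<sigma>\<in>{\<sigma>\<in>perms n. E \<sigma>}. Pn \<theta> n \<sigma>)"

end

theory Submission
  imports Defs "HOL-Combinatorics.Combinatorics"
begin


lemma funpow_agree:
  assumes "x \<in> A" "\<And>y. y \<in> A \<Longrightarrow> f y \<in> A" "\<And>y. y \<in> A \<Longrightarrow> f y = g y"
  shows "(f ^^ k) x = (g ^^ k) x \<and> (f ^^ k) x \<in> A"
  using assms by (induction k) auto

lemma cycle_of_agree:
  assumes "x \<in> A" "\<And>y. y \<in> A \<Longrightarrow> f y \<in> A" "\<And>y. y \<in> A \<Longrightarrow> f y = g y"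
  shows "cycle_of f x = cycle_of g x"
  using funpow_agree[OF assms] unfolding cycle_of_def by auto

lemma cycle_of_orbit:
  assumes "permutation \<sigma>"
  shows "cycle_of \<sigma> x = orbit \<sigma> x"
  unfolding cycle_of_def orbit_altdef_permutation[OF assms] by simp

lemma cycle_of_sub:
  assumes "\<sigma> permutes S" "x \<in> S"
  shows "cycle_of \<sigma> x \<subseteq> S"
  unfolding cycle_of_def using permutes_in_funpow_image[OF assms] by auto

lemma cycle_of_self: "x \<in> cycle_of \<sigma> x"
  unfolding cycle_of_def by (auto intro: exI[of _ 0])

lemma cycle_of_finite:
  assumes "\<sigma> permutes S" "finite S" "x \<in> S"
  shows "finite (cycle_of \<sigma> x)" "card (cycle_of \<sigma> x) \<ge> 1" "card (cycle_of \<sigma> x) \<le> card S"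
proof -
  show f: "finite (cycle_of \<sigma> x)" using cycle_of_sub[OF assms(1,3)] assms(2) finite_subset by blast
  show "card (cycle_of \<sigma> x) \<ge> 1" using f cycle_of_self[of x \<sigma>]
    by (metis One_nat_def Suc_leI card_gt_0_iff empty_iff)
  show "card (cycle_of \<sigma> x) \<le> card S" using cycle_of_sub[OF assms(1,3)] assms(2) card_mono by blast
qed

lemma cycle_of_same:
  assumes "\<sigma> permutes S" "finite S" "y \<in> cycle_of \<sigma> x"
  shows "cycle_of \<sigma> y = cycle_of \<sigma> x"
proof -
  have p: "permutation \<sigma>" using permutes_imp_permutation assms by blast
  have "cyclic_on \<sigma> (orbit \<sigma> x)" by (rule cyclic_on_orbit'[OF p])
  then show ?thesis using assms(3) orbit_cyclic_eq3 unfolding cycle_of_orbit[OF p] by metis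
qed

lemma cycle_of_mapsto:
  assumes "\<sigma> permutes S" "finite S" "y \<in> cycle_of \<sigma> x"
  shows "\<sigma> y \<in> cycle_of \<sigma> x"
proof -
  obtain k where "y = (\<sigma>^^k) x" using assms(3) unfolding cycle_of_def by auto
  then have "\<sigma> y = (\<sigma>^^(Suc k)) x" by simp
  then show ?thesis unfolding cycle_of_def by blast
qed

lemma cycle_of_preimage:
  assumes "\<sigma> permutes S" "finite S" "\<sigma> y \<in> cycle_of \<sigma> x"
  shows "y \<in> cycle_of \<sigma> x"
proof -
  have p: "permutation \<sigma>" using permutes_imp_permutation assms by blast
  have "cyclic_on \<sigma> (orbit \<sigma> x)" by (rule cyclic_on_orbit'[OF p])
  then show ?thesis using cyclic_on_f_in[OF assms(1)] assms(3) unfolding cycle_of_orbit[OF p] by blast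
qed



definition cyc :: "nat set \<Rightarrow> nat \<Rightarrow> (nat \<Rightarrow> nat) set" where
  "cyc A a = {\<sigma>. \<sigma> permutes A \<and> cycle_of \<sigma> a = A}"

definition cyclists :: "nat set \<Rightarrow> nat \<Rightarrow> nat list set" where
  "cyclists A a = {xs. set xs = A \<and> distinct xs \<and> hd xs = a}"

lemma cyclists_eq:
  assumes "a \<in> A"
  shows "cyclists A a = (#) a ` permutations_of_set (A - {a})"
proof (rule set_eqI, rule iffI)
  fix xs assume "xs \<in> cyclists A a"
  then have x: "set xs = A" "distinct xs" "hd xs = a" unfolding cyclists_def by auto
  then have ne: "xs \<noteq> []" using assms by auto
  then obtain ys where ys: "xs = a # ys" using x(3) by (cases xs) auto
  have "a \<notin> set ys" "distinct ys" using x(2) ys by simp_all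
  moreover have "set ys = A - {a}" using x(1) ys \<open>a \<notin> set ys\<close> by auto
  ultimately have "ys \<in> permutations_of_set (A - {a})" unfolding permutations_of_set_def by simp
  then show "xs \<in> (#) a ` permutations_of_set (A - {a})" using ys by blast
next
  fix xs assume "xs \<in> (#) a ` permutations_of_set (A - {a})"
  then obtain ys where ys: "xs = a # ys" "set ys = A - {a}" "distinct ys"
    unfolding permutations_of_set_def by blast
  have "set xs = A" using ys(1,2) assms by auto
  moreover have "distinct xs" using ys by simp
  moreover have "hd xs = a" using ys by simp
  ultimately show "xs \<in> cyclists A a" unfolding cyclists_def by simp
qed

lemma card_cyclists:
  assumes "finite A" "a \<in> A"
  shows "card (cyclists A a) = fact (card A - 1)"
proof -
  have inj: "inj_on ((#) a) (permutations_of_set (A - {a}))" by (simp add: inj_on_def)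
  have "card (cyclists A a) = card (permutations_of_set (A - {a}))"
    unfolding cyclists_eq[OF assms(2)] using card_image[OF inj] .
  also have "\<dots> = fact (card (A - {a}))" using assms(1) by (simp only: card_permutations_of_set finite_Diff)
  also have "card (A - {a}) = card A - 1" using assms by simp
  finally show ?thesis .
qed

lemma finite_cyclists:
  assumes "finite A" "a \<in> A"
  shows "finite (cyclists A a)"
proof -
  have "finite (permutations_of_set (A - {a}))" using assms(1) by simp
  then show ?thesis unfolding cyclists_eq[OF assms(2)] by simp
qed

lemma cycle_of_list_pow:
  assumes "distinct xs" "xs \<noteq> []"
  shows "((cycle_of_list xs) ^^ n) (xs ! 0) = xs ! (n mod length xs)"
proof -
  have "map ((cycle_of_list xs) ^^ n) xs = rotate n xs" by (rule cyclic_rotation[OF assms(1)])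
  then have "((cycle_of_list xs) ^^ n) (xs ! 0) = rotate n xs ! 0"
    by (metis assms(2) length_greater_0_conv nth_map)
  also have "\<dots> = xs ! (n mod length xs)" using assms(2) by (simp add: nth_rotate)
  finally show ?thesis .
qed

lemma cycle_of_list_cycle:
  assumes "distinct xs" "xs \<noteq> []"
  shows "cycle_of (cycle_of_list xs) (hd xs) = set xs"
proof -
  have h: "hd xs = xs ! 0" using assms(2) by (simp add: hd_conv_nth)
  have "cycle_of (cycle_of_list xs) (hd xs) = {xs ! (n mod length xs) | n. True}"
    unfolding cycle_of_def h cycle_of_list_pow[OF assms] by simp
  also have "\<dots> = set xs"
  proof (rule set_eqI, rule iffI)
    fix y assume "y \<in> {xs ! (n mod length xs) | n. True}"
    then show "y \<in> set xs" using assms(2) by auto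
  next
    fix y assume "y \<in> set xs"
    then obtain i where "i < length xs" "y = xs ! i" by (metis in_set_conv_nth)
    then have "y = xs ! (i mod length xs)" by simp
    then show "y \<in> {xs ! (n mod length xs) | n. True}" by blast
  qed
  finally show ?thesis .
qed



lemma card_cyc:
  assumes "finite A" "a \<in> A"
  shows "card (cyc A a) = fact (card A - 1)"
proof -
  have fc: "finite (cyc A a)"
    using finite_permutations[OF assms(1)] unfolding cyc_def
    by (rule finite_subset[rotated]) auto
  have fl: "finite (cyclists A a)" by (rule finite_cyclists[OF assms])
  have "card (cyclists A a) \<le> card (cyc A a)"
  proof (rule card_inj_on_le[where f = cycle_of_list])
    show "inj_on cycle_of_list (cyclists A a)"
    proof (rule inj_onI)
      fix xs ys assume xs: "xs \<in> cyclists A a" and ys: "ys \<in> cyclists A a"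
        and eq: "cycle_of_list xs = cycle_of_list ys"
      have x: "set xs = A" "distinct xs" "hd xs = a" and y: "set ys = A" "distinct ys" "hd ys = a"
        using xs ys unfolding cyclists_def by auto
      have ne: "xs \<noteq> []" "ys \<noteq> []" using x y assms by auto
      have len: "length xs = length ys" using x y by (metis distinct_card)
      have h0: "xs ! 0 = ys ! 0" using x y ne by (simp add: hd_conv_nth)
      show "xs = ys"
      proof (rule nth_equalityI[OF len])
        fix i assume i: "i < length xs"
        have "xs ! i = xs ! (i mod length xs)" using i by simp
        also have "\<dots> = ((cycle_of_list xs) ^^ i) (xs ! 0)" using cycle_of_list_pow[OF x(2) ne(1)] by simp
        also have "\<dots> = ((cycle_of_list ys) ^^ i) (ys ! 0)" using eq h0 by simp
        also have "\<dots> = ys ! (i mod length ys)" using cycle_of_list_pow[OF y(2) ne(2)] by simp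
        also have "\<dots> = ys ! i" using i len by simp
        finally show "xs ! i = ys ! i" .
      qed
    qed
    show "cycle_of_list ` cyclists A a \<subseteq> cyc A a"
    proof
      fix \<sigma> assume "\<sigma> \<in> cycle_of_list ` cyclists A a"
      then obtain xs where xs: "xs \<in> cyclists A a" "\<sigma> = cycle_of_list xs" by auto
      have x: "set xs = A" "distinct xs" "hd xs = a" using xs unfolding cyclists_def by auto
      have ne: "xs \<noteq> []" using x assms by auto
      show "\<sigma> \<in> cyc A a" unfolding cyc_def xs(2) using cycle_permutes[of xs] cycle_of_list_cycle[OF x(2) ne] x by auto
    qed
  qed (rule fc)
  moreover have "card (cyc A a) \<le> card (cyclists A a)"
  proof (rule card_inj_on_le[where f = "\<lambda>\<sigma>. support \<sigma> a"])
    show "inj_on (\<lambda>\<sigma>. support \<sigma> a) (cyc A a)"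
    proof (rule inj_onI)
      fix \<sigma> \<tau> assume s: "\<sigma> \<in> cyc A a" and t: "\<tau> \<in> cyc A a" and eq: "support \<sigma> a = support \<tau> a"
      have ps: "\<sigma> permutes A" "cycle_of \<sigma> a = A" and pt: "\<tau> permutes A" "cycle_of \<tau> a = A"
        using s t unfolding cyc_def by auto
      have pms: "permutation \<sigma>" "permutation \<tau>" using ps pt assms(1) permutes_imp_permutation by blast+
      have ss: "set (support \<sigma> a) = A" using support_set[OF pms(1)] ps(2) unfolding cycle_of_def by auto
      have st: "set (support \<tau> a) = A" using support_set[OF pms(2)] pt(2) unfolding cycle_of_def by auto
      show "\<sigma> = \<tau>"
      proof
        fix b show "\<sigma> b = \<tau> b"
        proof (cases "b \<in> A")
          case True
          then show ?thesis using cycle_restrict[OF pms(1), of b a] cycle_restrict[OF pms(2), of b a] ss st eq by simp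
        next
          case False
          then show ?thesis using ps(1) pt(1) unfolding permutes_def by auto
        qed
      qed
    qed
    show "(\<lambda>\<sigma>. support \<sigma> a) ` cyc A a \<subseteq> cyclists A a"
    proof
      fix xs assume "xs \<in> (\<lambda>\<sigma>. support \<sigma> a) ` cyc A a"
      then obtain \<sigma> where s: "\<sigma> \<in> cyc A a" "xs = support \<sigma> a" by auto
      have ps: "\<sigma> permutes A" "cycle_of \<sigma> a = A" using s unfolding cyc_def by auto
      have pm: "permutation \<sigma>" using ps assms(1) permutes_imp_permutation by blast
      have ss: "set (support \<sigma> a) = A" using support_set[OF pm] ps(2) unfolding cycle_of_def by auto
      have lp: "least_power \<sigma> a > 0" using least_power_of_permutation(2)[OF pm] .
      have "hd (support \<sigma> a) = a" using lp by (simp add: hd_map upt_conv_Cons)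
      then show "xs \<in> cyclists A a" unfolding cyclists_def s(2) using ss cycle_of_permutation[OF pm] by auto
    qed
  qed (rule fl)
  ultimately show ?thesis using card_cyclists[OF assms] by simp
qed



definition wt :: "(nat \<Rightarrow> real) \<Rightarrow> nat set \<Rightarrow> (nat \<Rightarrow> nat) \<Rightarrow> real" where
  "wt \<theta> S \<sigma> = (\<Prod>C\<in>cycle_of \<sigma> ` S. \<theta> (card C))"

definition W :: "(nat \<Rightarrow> real) \<Rightarrow> nat set \<Rightarrow> real" where
  "W \<theta> S = (\<Sum>\<sigma>\<in>{\<sigma>. \<sigma> permutes S}. wt \<theta> S \<sigma>)"

definition glue :: "nat set \<Rightarrow> (nat \<Rightarrow> nat) \<Rightarrow> (nat \<Rightarrow> nat) \<Rightarrow> nat \<Rightarrow> nat" where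
  "glue A \<alpha> \<beta> = (\<lambda>x. if x \<in> A then \<alpha> x else \<beta> x)"

lemma glue_props:
  assumes S: "finite S" "A \<subseteq> S" "a \<in> A" and al: "\<alpha> \<in> cyc A a" and be: "\<beta> permutes (S - A)"
  shows "glue A \<alpha> \<beta> permutes S"
    and "cycle_of (glue A \<alpha> \<beta>) a = A"
    and "cycle_of (glue A \<alpha> \<beta>) ` S = insert A (cycle_of \<beta> ` (S - A))"
    and "A \<notin> cycle_of \<beta> ` (S - A)"
    and "wt \<theta> S (glue A \<alpha> \<beta>) = \<theta> (card A) * wt \<theta> (S - A) \<beta>"
proof -
  have ap: "\<alpha> permutes A" and ac: "cycle_of \<alpha> a = A" using al unfolding cyc_def by auto
  have fA: "finite A" using S finite_subset by blast
  have fSA: "finite (S - A)" using S by simp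
  have "glue A \<alpha> \<beta> = \<alpha> \<circ> \<beta>"
  proof
    fix x show "glue A \<alpha> \<beta> x = (\<alpha> \<circ> \<beta>) x"
    proof (cases "x \<in> A")
      case True
      then have "\<beta> x = x" using be unfolding permutes_def by auto
      then show ?thesis using True unfolding glue_def by simp
    next
      case False
      have "\<beta> x \<notin> A"
      proof (cases "x \<in> S")
        case True
        then have "\<beta> x \<in> S - A" using False permutes_in_image[OF be] by auto
        then show ?thesis by auto
      next
        case False2: False
        then have "\<beta> x = x" using be unfolding permutes_def by auto
        then show ?thesis using False by simp
      qed
      then have "\<alpha> (\<beta> x) = \<beta> x" using ap unfolding permutes_def by auto
      then show ?thesis using False unfolding glue_def by simp
    qed
  qed
  then show gp: "glue A \<alpha> \<beta> permutes S"
    using permutes_compose[OF permutes_subset[OF be] permutes_subset[OF ap S(2)]] by auto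
  have inA: "\<And>x. x \<in> A \<Longrightarrow> cycle_of (glue A \<alpha> \<beta>) x = A"
  proof -
    fix x assume x: "x \<in> A"
    have "cycle_of (glue A \<alpha> \<beta>) x = cycle_of \<alpha> x"
      by (rule cycle_of_agree[OF x]) (auto simp: glue_def permutes_in_image[OF ap])
    also have "\<dots> = A" using cycle_of_same[OF ap fA, of x a] x ac by simp
    finally show "cycle_of (glue A \<alpha> \<beta>) x = A" .
  qed
  show "cycle_of (glue A \<alpha> \<beta>) a = A" using inA S(3) .
  have inB: "\<And>x. x \<in> S - A \<Longrightarrow> cycle_of (glue A \<alpha> \<beta>) x = cycle_of \<beta> x"
  proof -
    fix x assume x: "x \<in> S - A"
    show "cycle_of (glue A \<alpha> \<beta>) x = cycle_of \<beta> x"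
    proof (rule cycle_of_agree[OF x])
      fix y assume y: "y \<in> S - A"
      then show "glue A \<alpha> \<beta> y \<in> S - A" unfolding glue_def using permutes_in_image[OF be, of y] by simp
      show "glue A \<alpha> \<beta> y = \<beta> y" using y unfolding glue_def by simp
    qed
  qed
  show img: "cycle_of (glue A \<alpha> \<beta>) ` S = insert A (cycle_of \<beta> ` (S - A))"
  proof -
    have "S = A \<union> (S - A)" using S by auto
    then have "cycle_of (glue A \<alpha> \<beta>) ` S = cycle_of (glue A \<alpha> \<beta>) ` A \<union> cycle_of (glue A \<alpha> \<beta>) ` (S - A)"
      by (metis image_Un)
    also have "cycle_of (glue A \<alpha> \<beta>) ` A = {A}" using inA S(3) by auto
    also have "cycle_of (glue A \<alpha> \<beta>) ` (S - A) = cycle_of \<beta> ` (S - A)" using inB by auto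
    finally show ?thesis by simp
  qed
  show nin: "A \<notin> cycle_of \<beta> ` (S - A)"
  proof
    assume "A \<in> cycle_of \<beta> ` (S - A)"
    then obtain x where x: "x \<in> S - A" "A = cycle_of \<beta> x" by auto
    then show False using cycle_of_self[of x \<beta>] by auto
  qed
  show "wt \<theta> S (glue A \<alpha> \<beta>) = \<theta> (card A) * wt \<theta> (S - A) \<beta>"
    unfolding wt_def img using nin fSA by (simp add: prod.insert)
qed

lemma decomp_fiber:
  assumes S: "finite S" "A \<subseteq> S" "a \<in> A"
  shows "{\<sigma>. \<sigma> permutes S \<and> cycle_of \<sigma> a = A} = (\<lambda>(\<alpha>,\<beta>). glue A \<alpha> \<beta>) ` (cyc A a \<times> {\<beta>. \<beta> permutes (S - A)})"
proof (rule set_eqI, rule iffI)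
  fix \<sigma> assume "\<sigma> \<in> {\<sigma>. \<sigma> permutes S \<and> cycle_of \<sigma> a = A}"
  then have sp: "\<sigma> permutes S" and sc: "cycle_of \<sigma> a = A" by auto
  define \<alpha> where "\<alpha> = (\<lambda>x. if x \<in> A then \<sigma> x else x)"
  define \<beta> where "\<beta> = (\<lambda>x. if x \<in> A then x else \<sigma> x)"
  have fA: "finite A" using S finite_subset by blast
  have pm: "permutation \<sigma>" using permutes_imp_permutation[OF S(1) sp] .
  have cA: "cyclic_on \<sigma> A" using cyclic_on_orbit'[OF pm, of a] sc cycle_of_orbit[OF pm] by simp
  have map: "\<And>y. y \<in> A \<Longrightarrow> \<sigma> y \<in> A" using cycle_of_mapsto[OF sp S(1)] sc by blast
  have "\<alpha> permutes A"
  proof (rule bij_imp_permutes)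
    show "bij_betw \<alpha> A A"
    proof (rule bij_betw_imageI)
      show "inj_on \<alpha> A" using permutes_inj[OF sp] unfolding \<alpha>_def inj_on_def inj_def by auto
      show "\<alpha> ` A = A"
      proof
        show "\<alpha> ` A \<subseteq> A" using map unfolding \<alpha>_def by auto
        show "A \<subseteq> \<alpha> ` A"
        proof
          fix y assume y: "y \<in> A"
          have e: "\<sigma> (inv \<sigma> y) = y" using permutes_inverses(1)[OF sp] by simp
          then have "inv \<sigma> y \<in> A" using cycle_of_preimage[OF sp S(1), of "inv \<sigma> y" a] y sc by simp
          then show "y \<in> \<alpha> ` A" using e unfolding \<alpha>_def by force
        qed
      qed
    qed
  qed (simp add: \<alpha>_def)
  moreover have "cycle_of \<alpha> a = A"
  proof -
    have "cycle_of \<alpha> a = cycle_of \<sigma> a"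
      by (rule cycle_of_agree[OF S(3)]) (auto simp: \<alpha>_def map)
    then show ?thesis using sc by simp
  qed
  ultimately have "\<alpha> \<in> cyc A a" unfolding cyc_def by simp
  moreover have "\<beta> permutes (S - A)"
  proof -
    have "\<beta> = perm_restrict \<sigma> (S - A)"
      using sp unfolding \<beta>_def perm_restrict_def permutes_def by (auto simp: fun_eq_iff)
    then show ?thesis using perm_restrict_diff_cyclic[OF sp cA] by simp
  qed
  moreover have "\<sigma> = glue A \<alpha> \<beta>" unfolding glue_def \<alpha>_def \<beta>_def by auto
  ultimately show "\<sigma> \<in> (\<lambda>(\<alpha>,\<beta>). glue A \<alpha> \<beta>) ` (cyc A a \<times> {\<beta>. \<beta> permutes (S - A)})" by force
next
  fix \<sigma> assume "\<sigma> \<in> (\<lambda>(\<alpha>,\<beta>). glue A \<alpha> \<beta>) ` (cyc A a \<times> {\<beta>. \<beta> permutes (S - A)})"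
  then obtain \<alpha> \<beta> where "\<alpha> \<in> cyc A a" "\<beta> permutes (S - A)" "\<sigma> = glue A \<alpha> \<beta>" by auto
  then show "\<sigma> \<in> {\<sigma>. \<sigma> permutes S \<and> cycle_of \<sigma> a = A}" using glue_props[OF S] by auto
qed

lemma glue_inj:
  assumes S: "finite S" "A \<subseteq> S" "a \<in> A"
  shows "inj_on (\<lambda>(\<alpha>,\<beta>). glue A \<alpha> \<beta>) (cyc A a \<times> {\<beta>. \<beta> permutes (S - A)})"
proof (rule inj_onI, clarify)
  fix \<alpha> \<beta> \<alpha>' \<beta>'
  assume a: "\<alpha> \<in> cyc A a" "\<alpha>' \<in> cyc A a" and b: "\<beta> permutes (S - A)" "\<beta>' permutes (S - A)"
    and eq: "glue A \<alpha> \<beta> = glue A \<alpha>' \<beta>'"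
  have ap: "\<alpha> permutes A" "\<alpha>' permutes A" using a unfolding cyc_def by auto
  show "\<alpha> = \<alpha>' \<and> \<beta> = \<beta>'"
  proof
    show "\<alpha> = \<alpha>'"
    proof
      fix x show "\<alpha> x = \<alpha>' x"
        using fun_cong[OF eq, of x] ap unfolding glue_def permutes_def by (cases "x \<in> A") auto
    qed
    show "\<beta> = \<beta>'"
    proof
      fix x show "\<beta> x = \<beta>' x"
        using fun_cong[OF eq, of x] b unfolding glue_def permutes_def by (cases "x \<in> A") auto
    qed
  qed
qed

lemma W_decomp:
  assumes S: "finite S" "a \<in> S"
  shows "W \<theta> S = (\<Sum>A\<in>{A. A \<subseteq> S \<and> a \<in> A}. fact (card A - 1) * \<theta> (card A) * W \<theta> (S - A))"
proof -
  let ?P = "{\<sigma>. \<sigma> permutes S}"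
  let ?T = "{A. A \<subseteq> S \<and> a \<in> A}"
  have fP: "finite ?P" using finite_permutations[OF S(1)] by simp
  have fT: "finite ?T" using S(1) by (rule finite_subset[rotated, OF finite_Pow_iff[THEN iffD2]]) auto
  have img: "(\<lambda>\<sigma>. cycle_of \<sigma> a) ` ?P \<subseteq> ?T" using cycle_of_sub S(2) cycle_of_self by blast
  have "W \<theta> S = (\<Sum>A\<in>?T. \<Sum>\<sigma>\<in>{\<sigma>\<in>?P. cycle_of \<sigma> a = A}. wt \<theta> S \<sigma>)"
    unfolding W_def using sum.group[OF fP fT img, of "wt \<theta> S"] by simp
  also have "\<dots> = (\<Sum>A\<in>?T. fact (card A - 1) * \<theta> (card A) * W \<theta> (S - A))"
  proof (rule sum.cong[OF refl])
    fix A assume A: "A \<in> ?T"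
    then have As: "A \<subseteq> S" "a \<in> A" by auto
    have fA: "finite A" using S(1) As finite_subset by blast
    have "{\<sigma>\<in>?P. cycle_of \<sigma> a = A} = {\<sigma>. \<sigma> permutes S \<and> cycle_of \<sigma> a = A}" by simp
    also have "\<dots> = (\<lambda>(\<alpha>,\<beta>). glue A \<alpha> \<beta>) ` (cyc A a \<times> {\<beta>. \<beta> permutes (S - A)})"
      by (rule decomp_fiber[OF S(1) As])
    finally have e: "{\<sigma>\<in>?P. cycle_of \<sigma> a = A} = (\<lambda>(\<alpha>,\<beta>). glue A \<alpha> \<beta>) ` (cyc A a \<times> {\<beta>. \<beta> permutes (S - A)})" .
    have "(\<Sum>\<sigma>\<in>{\<sigma>\<in>?P. cycle_of \<sigma> a = A}. wt \<theta> S \<sigma>)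
        = (\<Sum>(\<alpha>,\<beta>)\<in>cyc A a \<times> {\<beta>. \<beta> permutes (S - A)}. wt \<theta> S (glue A \<alpha> \<beta>))"
      unfolding e by (subst sum.reindex[OF glue_inj[OF S(1) As]]) (simp add: case_prod_unfold)
    also have "\<dots> = (\<Sum>(\<alpha>,\<beta>)\<in>cyc A a \<times> {\<beta>. \<beta> permutes (S - A)}. \<theta> (card A) * wt \<theta> (S - A) \<beta>)"
      by (rule sum.cong[OF refl]) (auto simp: glue_props[OF S(1) As])
    also have "\<dots> = (\<Sum>\<alpha>\<in>cyc A a. \<Sum>\<beta>\<in>{\<beta>. \<beta> permutes (S - A)}. \<theta> (card A) * wt \<theta> (S - A) \<beta>)"
      by (rule sum.cartesian_product[symmetric])
    also have "\<dots> = of_nat (card (cyc A a)) * (\<theta> (card A) * W \<theta> (S - A))"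
      by (simp add: W_def sum_distrib_left)
    also have "\<dots> = fact (card A - 1) * \<theta> (card A) * W \<theta> (S - A)"
      using card_cyc[OF fA As(2)] by simp
    finally show "(\<Sum>\<sigma>\<in>{\<sigma>\<in>?P. cycle_of \<sigma> a = A}. wt \<theta> S \<sigma>) = fact (card A - 1) * \<theta> (card A) * W \<theta> (S - A)" .
  qed
  finally show ?thesis .
qed



lemma cs_eq:
  assumes S: "finite S" "a \<in> S"
  shows "{A. A \<subseteq> S \<and> a \<in> A} = insert a ` Pow (S - {a})"
proof (rule set_eqI, rule iffI)
  fix A assume "A \<in> {A. A \<subseteq> S \<and> a \<in> A}"
  then have "A = insert a (A - {a})" "A - {a} \<in> Pow (S - {a})" by auto
  then show "A \<in> insert a ` Pow (S - {a})" by blast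
next
  fix A assume "A \<in> insert a ` Pow (S - {a})"
  then show "A \<in> {A. A \<subseteq> S \<and> a \<in> A}" using S by auto
qed

lemma cs_step1:
  fixes F :: "nat \<Rightarrow> real"
  assumes S: "finite S" "a \<in> S"
  shows "(\<Sum>A\<in>{A. A \<subseteq> S \<and> a \<in> A}. F (card A)) = (\<Sum>B\<in>Pow (S - {a}). F (Suc (card B)))"
proof -
  have inj: "inj_on (insert a) (Pow (S - {a}))" unfolding inj_on_def by auto
  have "(\<Sum>A\<in>{A. A \<subseteq> S \<and> a \<in> A}. F (card A)) = (\<Sum>B\<in>Pow (S - {a}). F (card (insert a B)))"
    unfolding cs_eq[OF S] sum.reindex[OF inj] by (simp add: o_def)
  also have "\<dots> = (\<Sum>B\<in>Pow (S - {a}). F (Suc (card B)))"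
  proof (rule sum.cong[OF refl])
    fix B assume "B \<in> Pow (S - {a})"
    then have "finite B" "a \<notin> B" using S finite_subset by auto
    then show "F (card (insert a B)) = F (Suc (card B))" by simp
  qed
  finally show ?thesis .
qed

lemma cs_step2:
  fixes G :: "nat \<Rightarrow> real"
  assumes S: "finite S" "a \<in> S"
  shows "(\<Sum>B\<in>Pow (S - {a}). G (card B)) = (\<Sum>k<card S. of_nat ((card S - 1) choose k) * G k)"
proof -
  have fB: "finite (Pow (S - {a}))" using S by simp
  have img: "card ` Pow (S - {a}) \<subseteq> {..<card S}"
  proof
    fix k assume "k \<in> card ` Pow (S - {a})"
    then obtain B where B: "B \<subseteq> S - {a}" "k = card B" by blast
    have fS: "finite (S - {a})" using S(1) by simp
    have "card B \<le> card (S - {a})" by (rule card_mono[OF fS B(1)])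
    also have "\<dots> < card S" by (rule card_Diff1_less[OF S])
    finally show "k \<in> {..<card S}" using B(2) by simp
  qed
  have "(\<Sum>B\<in>Pow (S - {a}). G (card B)) = (\<Sum>k\<in>{..<card S}. \<Sum>B\<in>{B. B \<in> Pow (S - {a}) \<and> card B = k}. G (card B))"
    using sum.group[OF fB finite_lessThan img, of "\<lambda>B. G (card B)"] by simp
  also have "\<dots> = (\<Sum>k<card S. of_nat ((card S - 1) choose k) * G k)"
  proof (rule sum.cong[OF refl])
    fix k assume "k \<in> {..<card S}"
    have "(\<Sum>B\<in>{B. B \<in> Pow (S - {a}) \<and> card B = k}. G (card B)) = (\<Sum>B\<in>{B. B \<subseteq> S - {a} \<and> card B = k}. G k)"
      by (rule sum.cong) auto
    also have "\<dots> = of_nat (card {B. B \<subseteq> S - {a} \<and> card B = k}) * G k" by simp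
    also have "card {B. B \<subseteq> S - {a} \<and> card B = k} = card (S - {a}) choose k"
      using n_subsets[of "S - {a}" k] S by simp
    also have "card (S - {a}) = card S - 1" using S by simp
    finally show "(\<Sum>B\<in>{B. B \<in> Pow (S - {a}) \<and> card B = k}. G (card B)) = of_nat ((card S - 1) choose k) * G k" .
  qed
  finally show ?thesis .
qed

lemma count_sub:
  fixes F :: "nat \<Rightarrow> real"
  assumes S: "finite S" "a \<in> S"
  shows "(\<Sum>A\<in>{A. A \<subseteq> S \<and> a \<in> A}. F (card A)) = (\<Sum>k<card S. of_nat ((card S - 1) choose k) * F (Suc k))"
  using cs_step1[OF S, of F] cs_step2[OF S, of "\<lambda>k. F (Suc k)"] by simp

definition w :: "(nat \<Rightarrow> real) \<Rightarrow> nat \<Rightarrow> real" where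
  "w \<theta> n = W \<theta> {0..<n}"

lemma W_empty: "W \<theta> {} = 1"
  unfolding W_def wt_def by (simp add: permutes_empty)

lemma W_card_aux:
  assumes IH: "\<And>T. finite T \<Longrightarrow> card T < n \<Longrightarrow> W \<theta> T = w \<theta> (card T)"
    and S: "finite S" "card S = n" "n \<ge> 1"
  shows "W \<theta> S = (\<Sum>k<n. of_nat ((n - 1) choose k) * (fact k * \<theta> (Suc k) * w \<theta> (n - Suc k)))"
proof -
  obtain a where a: "a \<in> S" using S by fastforce
  have "W \<theta> S = (\<Sum>A\<in>{A. A \<subseteq> S \<and> a \<in> A}. fact (card A - 1) * \<theta> (card A) * W \<theta> (S - A))"
    by (rule W_decomp[OF S(1) a])
  also have "\<dots> = (\<Sum>A\<in>{A. A \<subseteq> S \<and> a \<in> A}. fact (card A - 1) * \<theta> (card A) * w \<theta> (n - card A))"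
  proof (rule sum.cong[OF refl])
    fix A assume A: "A \<in> {A. A \<subseteq> S \<and> a \<in> A}"
    then have fA: "finite A" "A \<subseteq> S" "a \<in> A" using S(1) finite_subset by auto
    have cA: "card A \<ge> 1" using fA by (metis One_nat_def Suc_leI card_gt_0_iff empty_iff)
    have c: "card (S - A) = n - card A" using card_Diff_subset[OF fA(1,2)] S by simp
    have "card (S - A) < n" using c cA S by simp
    then have "W \<theta> (S - A) = w \<theta> (n - card A)" using IH[of "S - A"] S(1) c by simp
    then show "fact (card A - 1) * \<theta> (card A) * W \<theta> (S - A) = fact (card A - 1) * \<theta> (card A) * w \<theta> (n - card A)"
      by simp
  qed
  also have "\<dots> = (\<Sum>k<card S. of_nat ((card S - 1) choose k) * (fact (Suc k - 1) * \<theta> (Suc k) * w \<theta> (n - Suc k)))"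
    by (rule count_sub[OF S(1) a, where F = "\<lambda>j. fact (j - 1) * \<theta> j * w \<theta> (n - j)"])
  finally show ?thesis using S by simp
qed

lemma W_card:
  assumes "finite S"
  shows "W \<theta> S = w \<theta> (card S)"
  using assms
proof (induction "card S" arbitrary: S rule: less_induct)
  case less
  show ?case
  proof (cases "card S = 0")
    case True
    then have "S = {}" using less.prems by simp
    then show ?thesis unfolding w_def by simp
  next
    case False
    then have ne: "card S \<ge> 1" by simp
    have IH: "\<And>T. finite T \<Longrightarrow> card T < card S \<Longrightarrow> W \<theta> T = w \<theta> (card T)" using less.hyps by blast
    have "W \<theta> S = (\<Sum>k<card S. of_nat ((card S - 1) choose k) * (fact k * \<theta> (Suc k) * w \<theta> (card S - Suc k)))"
      by (rule W_card_aux[OF IH less.prems refl ne])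
    also have "\<dots> = W \<theta> {0..<card S}"
      by (rule W_card_aux[OF IH, symmetric]) (use ne in simp_all)
    finally show ?thesis unfolding w_def .
  qed
qed

lemma w_0: "w \<theta> 0 = 1"
  unfolding w_def using W_empty by simp

lemma w_rec:
  assumes "n \<ge> 1"
  shows "w \<theta> n = (\<Sum>k<n. of_nat ((n - 1) choose k) * (fact k * \<theta> (Suc k) * w \<theta> (n - Suc k)))"
proof -
  have "w \<theta> n = W \<theta> {0..<n}" unfolding w_def ..
  also have "\<dots> = (\<Sum>k<n. of_nat ((n - 1) choose k) * (fact k * \<theta> (Suc k) * w \<theta> (n - Suc k)))"
    by (rule W_card_aux) (use assms W_card in auto)
  finally show ?thesis .
qed

lemma weight_wt:
  assumes "\<sigma> permutes {1..n}"
  shows "weight \<theta> n \<sigma> = wt \<theta> {1..n} \<sigma>"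
proof -
  let ?Cs = "cycle_of \<sigma> ` {1..n}"
  have fCs: "finite ?Cs" by simp
  have img: "card ` ?Cs \<subseteq> {1..n}" using cycle_of_finite[OF assms] by auto
  have "wt \<theta> {1..n} \<sigma> = (\<Prod>j\<in>{1..n}. \<Prod>C\<in>{C. C \<in> ?Cs \<and> card C = j}. \<theta> (card C))"
    unfolding wt_def by (rule prod.group[OF fCs _ img, symmetric]) simp
  also have "\<dots> = (\<Prod>j\<in>{1..n}. \<theta> j ^ R n j \<sigma>)"
  proof (rule prod.cong[OF refl])
    fix j assume "j \<in> {1..n}"
    have "(\<Prod>C\<in>{C. C \<in> ?Cs \<and> card C = j}. \<theta> (card C)) = (\<Prod>C\<in>{C. C \<in> ?Cs \<and> card C = j}. \<theta> j)"
      by (rule prod.cong) auto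
    also have "\<dots> = \<theta> j ^ R n j \<sigma>" unfolding R_def cycles_of_def by simp
    finally show "(\<Prod>C\<in>{C. C \<in> ?Cs \<and> card C = j}. \<theta> (card C)) = \<theta> j ^ R n j \<sigma>" .
  qed
  finally show ?thesis unfolding weight_def by simp
qed

lemma h_w: "h \<theta> n = w \<theta> n / fact n"
proof -
  have "(\<Sum>\<sigma>\<in>perms n. weight \<theta> n \<sigma>) = W \<theta> {1..n}"
    unfolding W_def perms_def by (rule sum.cong) (auto simp: weight_wt)
  also have "\<dots> = w \<theta> n" using W_card[of "{1..n}"] by simp
  finally show ?thesis unfolding h_def by simp
qed

lemma h_rec:
  assumes "n \<ge> 1"
  shows "of_nat n * h \<theta> n = (\<Sum>k<n. \<theta> (Suc k) * h \<theta> (n - Suc k))"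
proof -
  have "of_nat n * h \<theta> n = of_nat n * w \<theta> n / fact n" unfolding h_w by simp
  also have "\<dots> = (\<Sum>k<n. of_nat n * (of_nat ((n - 1) choose k) * (fact k * \<theta> (Suc k) * w \<theta> (n - Suc k))) / fact n)"
    unfolding w_rec[OF assms] by (simp add: sum_distrib_left sum_divide_distrib)
  also have "\<dots> = (\<Sum>k<n. \<theta> (Suc k) * h \<theta> (n - Suc k))"
  proof (rule sum.cong[OF refl])
    fix k assume k: "k \<in> {..<n}"
    have f1: "fact k * fact (n - 1 - k) * ((n - 1) choose k) = (fact (n - 1) :: nat)"
      using k by (intro binomial_fact_lemma) auto
    have f1': "fact k * fact (n - 1 - k) * real ((n - 1) choose k) = fact (n - 1)"
      using arg_cong[OF f1, of real] by (simp add: of_nat_mult)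
    have f2: "(fact n :: real) = of_nat n * fact (n - 1)"
      using assms by (metis Suc_diff_1 fact_Suc le_simps(3) of_nat_mult of_nat_fact One_nat_def)
    have nk: "n - Suc k = n - 1 - k" by simp
    have fpos: "(fact (n - 1 - k) :: real) > 0" by simp
    have "of_nat n * (of_nat ((n - 1) choose k) * (fact k * \<theta> (Suc k) * w \<theta> (n - Suc k))) / fact n
        = of_nat n * (fact k * fact (n - 1 - k) * real ((n - 1) choose k)) * \<theta> (Suc k) * (w \<theta> (n - Suc k) / fact (n - 1 - k)) / fact n"
      using fpos by (simp add: field_simps)
    also have "\<dots> = \<theta> (Suc k) * h \<theta> (n - Suc k)"
      unfolding f1' f2 h_w nk using assms by (simp add: field_simps)
    finally show "of_nat n * (of_nat ((n - 1) choose k) * (fact k * \<theta> (Suc k) * w \<theta> (n - Suc k))) / fact n = \<theta> (Suc k) * h \<theta> (n - Suc k)" .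
  qed
  finally show ?thesis .
qed



lemma h_0: "h \<theta> 0 = 1"
  unfolding h_w w_0 by simp

lemma h_pos:
  assumes pos: "\<And>n. n \<ge> 1 \<Longrightarrow> \<theta> n > 0"
  shows "h \<theta> n > 0"
proof (induction n rule: less_induct)
  case (less n)
  show ?case
  proof (cases "n = 0")
    case True
    then show ?thesis using h_0 by simp
  next
    case False
    then have n1: "n \<ge> 1" by simp
    have "(\<Sum>k<n. \<theta> (Suc k) * h \<theta> (n - Suc k)) > 0"
    proof (rule sum_pos2[where i = "n - 1"])
      show "finite {..<n}" by simp
      show "n - 1 \<in> {..<n}" using n1 by simp
      have "\<theta> (Suc (n - 1)) > 0" using pos by simp
      moreover have "h \<theta> (n - Suc (n - 1)) > 0" using n1 h_0 by simp
      ultimately show "0 < \<theta> (Suc (n - 1)) * h \<theta> (n - Suc (n - 1))" by simp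
      fix k assume k: "k \<in> {..<n}"
      have "\<theta> (Suc k) > 0" using pos by simp
      moreover have "h \<theta> (n - Suc k) > 0" using less.IH[of "n - Suc k"] n1 by simp
      ultimately show "0 \<le> \<theta> (Suc k) * h \<theta> (n - Suc k)" by simp
    qed
    then have "of_nat n * h \<theta> n > 0" using h_rec[OF n1] by simp
    then show ?thesis using n1 by (simp add: zero_less_mult_iff)
  qed
qed

lemma weight_nonneg:
  assumes pos: "\<And>n. n \<ge> 1 \<Longrightarrow> \<theta> n > 0"
  shows "weight \<theta> n \<sigma> \<ge> 0"
  unfolding weight_def
proof (rule prod_nonneg)
  fix j assume "j \<in> {1..n}"
  then have "\<theta> j > 0" using pos by simp
  then show "0 \<le> \<theta> j ^ R n j \<sigma>" by simp
qed

lemma Pn_nonneg: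
  assumes pos: "\<And>n. n \<ge> 1 \<Longrightarrow> \<theta> n > 0"
  shows "Pn \<theta> n \<sigma> \<ge> 0"
  unfolding Pn_def using weight_nonneg[where \<theta>=\<theta>, OF pos] h_pos[where \<theta>=\<theta>, OF pos, where n=n] by simp

lemma Prob_total:
  assumes pos: "\<And>n. n \<ge> 1 \<Longrightarrow> \<theta> n > 0"
  shows "(\<Sum>\<sigma>\<in>perms n. Pn \<theta> n \<sigma>) = 1"
proof -
  have hp: "h \<theta> n > 0" by (rule h_pos[where \<theta>=\<theta>, OF pos])
  have "(\<Sum>\<sigma>\<in>perms n. Pn \<theta> n \<sigma>) = (\<Sum>\<sigma>\<in>perms n. weight \<theta> n \<sigma>) / (fact n * h \<theta> n)"
    unfolding Pn_def by (simp add: sum_divide_distrib)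
  also have "(\<Sum>\<sigma>\<in>perms n. weight \<theta> n \<sigma>) = fact n * h \<theta> n" unfolding h_def by simp
  finally show ?thesis using hp by simp
qed

lemma finite_perms: "finite (perms n)"
  unfolding perms_def using finite_permutations[of "{1..n}"] by simp

lemma Prob_mono:
  assumes pos: "\<And>n. n \<ge> 1 \<Longrightarrow> \<theta> n > 0"
    and imp: "\<And>\<sigma>. \<sigma> \<in> perms n \<Longrightarrow> E \<sigma> \<Longrightarrow> F \<sigma>"
  shows "Prob \<theta> n E \<le> Prob \<theta> n F"
  unfolding Prob_def
proof (rule sum_mono2)
  show "finite {\<sigma> \<in> perms n. F \<sigma>}" using finite_perms by simp
  show "{\<sigma> \<in> perms n. E \<sigma>} \<subseteq> {\<sigma> \<in> perms n. F \<sigma>}" using imp by auto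
  fix \<sigma> show "0 \<le> Pn \<theta> n \<sigma>" by (rule Pn_nonneg[where \<theta>=\<theta>, OF pos])
qed

lemma Prob_le1:
  assumes pos: "\<And>n. n \<ge> 1 \<Longrightarrow> \<theta> n > 0"
  shows "Prob \<theta> n E \<le> 1"
proof -
  have "Prob \<theta> n E \<le> Prob \<theta> n (\<lambda>_. True)"
    using Prob_mono[where \<theta>=\<theta>, OF pos, where n=n and E=E and F="\<lambda>_. True"] by simp
  also have "\<dots> = 1" unfolding Prob_def using Prob_total[where \<theta>=\<theta>, OF pos] by simp
  finally show ?thesis .
qed

lemma L1_iff:
  assumes "\<sigma> permutes {1..n}" "n \<ge> 1"
  shows "L1 \<sigma> = n \<longleftrightarrow> cycle_of \<sigma> 1 = {1..n}"
proof
  have sub: "cycle_of \<sigma> 1 \<subseteq> {1..n}" by (rule cycle_of_sub[OF assms(1)]) (use assms in simp)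
  assume "L1 \<sigma> = n"
  then have "card (cycle_of \<sigma> 1) = card {1..n}" unfolding L1_def by simp
  then show "cycle_of \<sigma> 1 = {1..n}" using card_subset_eq[OF _ sub] by simp
next
  assume "cycle_of \<sigma> 1 = {1..n}"
  then show "L1 \<sigma> = n" unfolding L1_def by simp
qed

lemma full_cycle_image:
  assumes "\<sigma> permutes {1..n}" "n \<ge> 1" "cycle_of \<sigma> 1 = {1..n}"
  shows "cycle_of \<sigma> ` {1..n} = {{1..n}}"
proof -
  have "\<And>x. x \<in> {1..n} \<Longrightarrow> cycle_of \<sigma> x = {1..n}"
    using cycle_of_same[OF assms(1) finite_atLeastAtMost] assms(3) by metis
  moreover have "{1..n} \<noteq> ({} :: nat set)" using assms(2) by simp
  ultimately show ?thesis by auto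
qed

lemma K_iff:
  assumes "\<sigma> permutes {1..n}" "n \<ge> 1"
  shows "K n \<sigma> = 1 \<longleftrightarrow> L1 \<sigma> = n"
proof
  assume "K n \<sigma> = 1"
  then obtain C where C: "cycle_of \<sigma> ` {1..n} = {C}" unfolding K_def cycles_of_def using card_1_singletonE by blast
  have "cycle_of \<sigma> 1 = C" using C assms(2) by auto
  have "{1..n} \<subseteq> cycle_of \<sigma> 1"
  proof
    fix x assume "x \<in> {1..n}"
    then have "cycle_of \<sigma> x = C" using C by auto
    then show "x \<in> cycle_of \<sigma> 1" using cycle_of_self[of x \<sigma>] \<open>cycle_of \<sigma> 1 = C\<close> by simp
  qed
  moreover have "cycle_of \<sigma> 1 \<subseteq> {1..n}" by (rule cycle_of_sub[OF assms(1)]) (use assms in simp)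
  ultimately show "L1 \<sigma> = n" using L1_iff[OF assms] by blast
next
  assume "L1 \<sigma> = n"
  then have "cycle_of \<sigma> 1 = {1..n}" using L1_iff[OF assms] by simp
  then show "K n \<sigma> = 1" unfolding K_def cycles_of_def using full_cycle_image[OF assms] by simp
qed

lemma R_zero:
  assumes "\<sigma> permutes {1..n}" "n \<ge> 1" "L1 \<sigma> = n" "j \<noteq> n"
  shows "R n j \<sigma> = 0"
proof -
  have "cycle_of \<sigma> 1 = {1..n}" using L1_iff[OF assms(1,2)] assms(3) by simp
  then have "cycles_of n \<sigma> = {{1..n}}" unfolding cycles_of_def using full_cycle_image[OF assms(1,2)] by simp
  then show ?thesis unfolding R_def using assms(4) by simp
qed

lemma Prob_L1:
  assumes pos: "\<And>n. n \<ge> 1 \<Longrightarrow> \<theta> n > 0" and n1: "n \<ge> 1"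
  shows "Prob \<theta> n (\<lambda>\<sigma>. L1 \<sigma> = n) = \<theta> n / (of_nat n * h \<theta> n)"
proof -
  have seteq: "{\<sigma> \<in> perms n. L1 \<sigma> = n} = cyc {1..n} 1"
    unfolding perms_def cyc_def using L1_iff[OF _ n1] by auto
  have w: "Pn \<theta> n \<sigma> = \<theta> n / (fact n * h \<theta> n)" if s: "\<sigma> \<in> cyc {1..n} 1" for \<sigma>
  proof -
    have sp: "\<sigma> permutes {1..n}" "cycle_of \<sigma> 1 = {1..n}" using s unfolding cyc_def by auto
    have "weight \<theta> n \<sigma> = wt \<theta> {1..n} \<sigma>" by (rule weight_wt[OF sp(1)])
    also have "\<dots> = \<theta> n" unfolding wt_def full_cycle_image[OF sp(1) n1 sp(2)] by simp
    finally show ?thesis unfolding Pn_def by simp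
  qed
  have "Prob \<theta> n (\<lambda>\<sigma>. L1 \<sigma> = n) = (\<Sum>\<sigma>\<in>cyc {1..n} 1. \<theta> n / (fact n * h \<theta> n))"
    unfolding Prob_def seteq using w by simp
  also have "\<dots> = of_nat (fact (n - 1)) * \<theta> n / (fact n * h \<theta> n)"
    using card_cyc[of "{1..n}" 1] n1 by simp
  also have "(fact n :: real) = of_nat n * fact (n - 1)"
    using n1 by (metis Suc_diff_1 fact_Suc le_simps(3) of_nat_mult of_nat_fact One_nat_def)
  finally show ?thesis using h_pos[where \<theta>=\<theta>, OF pos, where n=n] n1 by (simp add: field_simps)
qed



lemma c_rec:
  assumes pos: "\<And>n. n \<ge> 1 \<Longrightarrow> \<theta> n > 0" and n1: "n \<ge> 1"
  shows "of_nat n * (h \<theta> n / \<theta> n) = 1 + (\<Sum>j=1..n-1. \<theta> j * \<theta> (n - j) / \<theta> n * (h \<theta> (n - j) / \<theta> (n - j)))"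
proof -
  obtain m where m: "n = Suc m" using n1 by (cases n) auto
  have tp: "\<theta> n > 0" using pos n1 by simp
  have "of_nat n * h \<theta> n = (\<Sum>k<n. \<theta> (Suc k) * h \<theta> (n - Suc k))" by (rule h_rec[OF n1])
  also have "\<dots> = (\<Sum>j=1..n. \<theta> j * h \<theta> (n - j))" by (rule sum_bounds_lt_plus1)
  also have "\<dots> = (\<Sum>j=1..m. \<theta> j * h \<theta> (n - j)) + \<theta> n"
    unfolding m by (simp add: h_0)
  also have "(\<Sum>j=1..m. \<theta> j * h \<theta> (n - j)) = (\<Sum>j=1..m. \<theta> n * (\<theta> j * \<theta> (n - j) / \<theta> n * (h \<theta> (n - j) / \<theta> (n - j))))"
  proof (rule sum.cong[OF refl])
    fix j assume j: "j \<in> {1..m}"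
    have "j \<le> m" using j by simp
    then have "n - j \<ge> 1" using m by (simp add: Suc_diff_le)
    then have "\<theta> (n - j) > 0" using pos by simp
    then show "\<theta> j * h \<theta> (n - j) = \<theta> n * (\<theta> j * \<theta> (n - j) / \<theta> n * (h \<theta> (n - j) / \<theta> (n - j)))"
      using tp by (simp add: field_simps)
  qed
  also have "\<dots> = \<theta> n * (\<Sum>j=1..m. \<theta> j * \<theta> (n - j) / \<theta> n * (h \<theta> (n - j) / \<theta> (n - j)))"
    by (simp add: sum_distrib_left)
  finally have "of_nat n * h \<theta> n = \<theta> n * (1 + (\<Sum>j=1..m. \<theta> j * \<theta> (n - j) / \<theta> n * (h \<theta> (n - j) / \<theta> (n - j))))"
    by (simp add: algebra_simps)
  then show ?thesis using tp m by (simp add: field_simps)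
qed

lemma main_limit:
  assumes pos: "\<And>n. n \<ge> 1 \<Longrightarrow> \<theta> n > 0"
    and lim: "(\<lambda>n. \<Sum>j=1..n-1. \<theta> j * \<theta> (n - j) / \<theta> n) \<longlonglongrightarrow> 0"
  shows "(\<lambda>n. of_nat n * (h \<theta> n / \<theta> n)) \<longlonglongrightarrow> 1"
proof -
  define c where "c n = h \<theta> n / \<theta> n" for n
  define s where "s n = (\<Sum>j=1..n-1. \<theta> j * \<theta> (n - j) / \<theta> n)" for n
  have cnn: "c n \<ge> 0" if "n \<ge> 1" for n
    unfolding c_def using h_pos[where \<theta>=\<theta>, OF pos, where n=n] pos[OF that] by simp
  have snn: "s n \<ge> 0" for n
    unfolding s_def by (rule sum_nonneg) (use pos in \<open>auto intro!: divide_nonneg_pos mult_nonneg_nonneg less_imp_le\<close>)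
  have rec: "of_nat n * c n = 1 + (\<Sum>j=1..n-1. \<theta> j * \<theta> (n - j) / \<theta> n * c (n - j))" if "n \<ge> 1" for n
    unfolding c_def using c_rec[where \<theta>=\<theta>, OF pos that] .
  have bnd: "of_nat n * c n \<le> 1 + B * s n" if "n \<ge> 1" "\<And>j. j \<in> {1..n-1} \<Longrightarrow> c (n - j) \<le> B" for n B
  proof -
    have "(\<Sum>j=1..n-1. \<theta> j * \<theta> (n - j) / \<theta> n * c (n - j)) \<le> (\<Sum>j=1..n-1. \<theta> j * \<theta> (n - j) / \<theta> n * B)"
    proof (rule sum_mono)
      fix j assume j: "j \<in> {1..n-1}"
      have nn: "\<theta> j * \<theta> (n - j) / \<theta> n \<ge> 0" using pos j
        by (intro divide_nonneg_pos mult_nonneg_nonneg less_imp_le) auto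
      show "\<theta> j * \<theta> (n - j) / \<theta> n * c (n - j) \<le> \<theta> j * \<theta> (n - j) / \<theta> n * B"
        by (rule mult_left_mono[OF that(2)[OF j] nn])
    qed
    also have "\<dots> = B * s n" unfolding s_def sum_distrib_left by (rule sum.cong) auto
    finally show ?thesis using rec[OF that(1)] by simp
  qed
  have sl: "s \<longlonglongrightarrow> 0" unfolding s_def using lim .
  obtain N0 where N0': "\<forall>n\<ge>N0. norm (s n - 0) < 1"
    using LIMSEQ_D[OF sl, of 1] by auto
  have N0: "s n < 1" if "n \<ge> N0" for n
  proof -
    have "norm (s n - 0) < 1" using N0' that by blast
    then show ?thesis by (simp add: abs_less_iff)
  qed
  define N where "N = max N0 1"
  define M where "M = max 1 (Max (c ` {1..N}))"
  have M1: "M \<ge> 1" unfolding M_def by simp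
  have cM: "c n \<le> M" if "n \<ge> 1" for n
    using that
  proof (induction n rule: less_induct)
    case (less n)
    show ?case
    proof (cases "n \<le> N")
      case True
      then have "c n \<le> Max (c ` {1..N})" using less.prems by (intro Max_ge) auto
      then show ?thesis unfolding M_def by simp
    next
      case False
      then have n2: "n \<ge> 2" and nN: "n \<ge> N0" unfolding N_def by auto
      have "of_nat n * c n \<le> 1 + M * s n"
      proof (rule bnd)
        show "1 \<le> n" using n2 by simp
        fix j assume "j \<in> {1..n-1}"
        then show "c (n - j) \<le> M" using less.IH[of "n - j"] by auto
      qed
      also have "\<dots> \<le> 1 + M" using N0[OF nN] M1 snn[of n] by (simp add: mult_left_le)
      also have "\<dots> \<le> 2 * M" using M1 by simp
      also have "\<dots> \<le> of_nat n * M" using n2 M1 by (intro mult_right_mono) auto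
      finally show ?thesis using n2 by simp
    qed
  qed
  show ?thesis
  proof (rule tendsto_sandwich[where f = "\<lambda>_. 1" and h = "\<lambda>n. 1 + M * s n"])
    show "\<forall>\<^sub>F n in sequentially. 1 \<le> of_nat n * (h \<theta> n / \<theta> n)"
    proof (rule eventually_sequentiallyI[of 1])
      fix n :: nat assume n: "n \<ge> 1"
      have "1 \<le> of_nat n * c n"
      proof -
        have "(\<Sum>j=1..n-1. \<theta> j * \<theta> (n - j) / \<theta> n * c (n - j)) \<ge> 0"
        proof (rule sum_nonneg)
          fix j assume j: "j \<in> {1..n-1}"
          have a: "\<theta> j > 0" "\<theta> (n - j) > 0" "\<theta> n > 0" using pos j n by auto
          have b: "c (n - j) \<ge> 0" using cnn j by auto
          show "0 \<le> \<theta> j * \<theta> (n - j) / \<theta> n * c (n - j)" using a b by simp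
        qed
        then show ?thesis using rec[OF n] by simp
      qed
      then show "1 \<le> of_nat n * (h \<theta> n / \<theta> n)" unfolding c_def .
    qed
    show "\<forall>\<^sub>F n in sequentially. of_nat n * (h \<theta> n / \<theta> n) \<le> 1 + M * s n"
    proof (rule eventually_sequentiallyI[of 1])
      fix n :: nat assume n: "n \<ge> 1"
      have "of_nat n * c n \<le> 1 + M * s n" by (rule bnd[OF n]) (use cM in auto)
      then show "of_nat n * (h \<theta> n / \<theta> n) \<le> 1 + M * s n" unfolding c_def .
    qed
    show "((\<lambda>_. 1) \<longlongrightarrow> (1::real)) sequentially" by simp
    have "(\<lambda>n. 1 + M * s n) \<longlonglongrightarrow> 1 + M * 0" by (intro tendsto_intros sl)
    then show "(\<lambda>n. 1 + M * s n) \<longlonglongrightarrow> 1" by simp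
  qed
qed

theorem theorem3p1:
  fixes \<theta> :: "nat \<Rightarrow> real"
  assumes pos: "\<And>n. n \<ge> 1 \<Longrightarrow> \<theta> n > 0"
    and lim: "(\<lambda>n. \<Sum>j=1..n-1. \<theta> j * \<theta> (n - j) / \<theta> n) \<longlonglongrightarrow> 0"
  shows "(\<lambda>n. Prob \<theta> n (\<lambda>\<sigma>. L1 \<sigma> = n)) \<longlonglongrightarrow> 1
     \<and> (\<lambda>n. Prob \<theta> n (\<lambda>\<sigma>. K n \<sigma> = 1)) \<longlonglongrightarrow> 1
     \<and> (\<forall>j. (\<lambda>n. Prob \<theta> n (\<lambda>\<sigma>. R n j \<sigma> = 0)) \<longlonglongrightarrow> 1)"
proof -
  have A0: "(\<lambda>n. of_nat n * (h \<theta> n / \<theta> n)) \<longlonglongrightarrow> (1::real)"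
    by (rule main_limit[where \<theta>=\<theta>, OF pos lim])
  have A: "(\<lambda>n. inverse (of_nat n * (h \<theta> n / \<theta> n))) \<longlonglongrightarrow> inverse (1::real)"
    using tendsto_inverse[OF A0] by simp
  have eqL: "\<forall>\<^sub>F n in sequentially. inverse (of_nat n * (h \<theta> n / \<theta> n)) = Prob \<theta> n (\<lambda>\<sigma>. L1 \<sigma> = n)"
  proof (rule eventually_sequentiallyI[of 1])
    fix n :: nat assume n: "n \<ge> 1"
    have "\<theta> n > 0" using pos n by simp
    moreover have "h \<theta> n > 0" by (rule h_pos) (use pos in auto)
    ultimately have e: "inverse (of_nat n * (h \<theta> n / \<theta> n)) = \<theta> n / (of_nat n * h \<theta> n)"
      using n by (simp add: field_split_simps)
    show "inverse (of_nat n * (h \<theta> n / \<theta> n)) = Prob \<theta> n (\<lambda>\<sigma>. L1 \<sigma> = n)"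
      unfolding e using Prob_L1[where \<theta>=\<theta>, OF pos n] by simp
  qed
  have L: "(\<lambda>n. Prob \<theta> n (\<lambda>\<sigma>. L1 \<sigma> = n)) \<longlonglongrightarrow> 1"
    using Lim_transform_eventually[OF A eqL] by simp
  have eqK: "\<forall>\<^sub>F n in sequentially. Prob \<theta> n (\<lambda>\<sigma>. L1 \<sigma> = n) = Prob \<theta> n (\<lambda>\<sigma>. K n \<sigma> = 1)"
  proof (rule eventually_sequentiallyI[of 1])
    fix n :: nat assume n: "n \<ge> 1"
    have "{\<sigma> \<in> perms n. L1 \<sigma> = n} = {\<sigma> \<in> perms n. K n \<sigma> = 1}"
      unfolding perms_def using K_iff[OF _ n] by auto
    then show "Prob \<theta> n (\<lambda>\<sigma>. L1 \<sigma> = n) = Prob \<theta> n (\<lambda>\<sigma>. K n \<sigma> = 1)" unfolding Prob_def by simp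
  qed
  have K: "(\<lambda>n. Prob \<theta> n (\<lambda>\<sigma>. K n \<sigma> = 1)) \<longlonglongrightarrow> 1"
    by (rule Lim_transform_eventually[OF L eqK])
  have R: "(\<lambda>n. Prob \<theta> n (\<lambda>\<sigma>. R n j \<sigma> = 0)) \<longlonglongrightarrow> 1" for j
  proof (rule tendsto_sandwich[OF _ _ L tendsto_const])
    show "\<forall>\<^sub>F n in sequentially. Prob \<theta> n (\<lambda>\<sigma>. L1 \<sigma> = n) \<le> Prob \<theta> n (\<lambda>\<sigma>. R n j \<sigma> = 0)"
    proof (rule eventually_sequentiallyI[of "Suc j"])
      fix n :: nat assume n: "n \<ge> Suc j"
      show "Prob \<theta> n (\<lambda>\<sigma>. L1 \<sigma> = n) \<le> Prob \<theta> n (\<lambda>\<sigma>. R n j \<sigma> = 0)"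
      proof (rule Prob_mono[where \<theta>=\<theta>, OF pos])
        fix \<sigma> assume "\<sigma> \<in> perms n" "L1 \<sigma> = n"
        then show "R n j \<sigma> = 0" using R_zero[of \<sigma> n j] n unfolding perms_def by simp
      qed
    qed
    show "\<forall>\<^sub>F n in sequentially. Prob \<theta> n (\<lambda>\<sigma>. R n j \<sigma> = 0) \<le> 1"
      using Prob_le1[where \<theta>=\<theta>, OF pos] by simp
  qed
  show ?thesis using L K R by blast
qed

end
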